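(* Let $n,b$ be integers with $1<n<b$, let $C$ be an $(n,b)$-permutiple class with graph $G_C$, and suppose that the state $n-1$ is a vertex of $\Gamma_C$. Then the symmetric closure $\widehat{C}$ of $C$ is a symmetric class. Moreover, the following are equivalent: (1) $C$ is a symmetric class; (2) $C=\widehat{C}$; (3) $\Gamma_C$ is a symmetric subgraph of the $(n,b)$-Hoey-Sloane graph (i.e. $\overline{\Gamma}_C=\Gamma_C$); (4) $G_C$ is a symmetric graph (i.e. $\overline{G}_C=G_C$).
   Context: For digits $0\le d_j<b$, $(d_k,\ldots,d_0)_b=\sum_j d_jb^j$ (leading zeros allowed). For a permutation $\sigma$ of $\{0,\ldots,k\}$, $(d_k,\ldots,d_0)_b$ is an $(n,b,\sigma)$-permutiple if $(d_k,\ldots,d_0)_b=n\cdot(d_{\sigma(k)},\ldots,d_{\sigma(0)})_b$; an $(n,b)$-permutiple if this holds for some $\sigma$. Its graph $G_p$ is the directed graph on vertex set $\{0,\ldots,b-1\}$ with edge set $\{(d_j,d_{\sigma(j)})\mid 0\le j\le k\}$. For a directed graph $G$ on $\{0,\ldots,b-1\}$ let $\mathrm{Cl}(G)$ be the set of all $(n,b)$-permutiples $q$ with $G_q$ a subgraph of $G$. The class of a permutiple $p$ is $C=\mathrm{Cl}(G_p)$, with graph $G_C=G_p$. For a digit $d$ put $\overline d=b-1-d$, for a state $c\in\{0,\dots,n-1\}$ put $\overline c=n-1-c$. The reflection $\overline G$ of a graph $G$ on $\{0,\ldots,b-1\}$ has edges $(\overline d_1,\overline d_2)$ for edges $(d_1,d_2)$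 of $G$. With $\lambda(x)$ the least non-negative residue mod $b$, the mother graph $M$ has vertex set $\{0,\ldots,b-1\}$ and edges the pairs $(d_1,d_2)$ with $\lambda(d_1+(b-n)d_2)\le n-1$. The Hoey-Sloane graph $\Gamma$ is the edge-labelled directed graph on states $\{0,\ldots,n-1\}$ where $(c_1,c_2)$ is an edge labelled by every edge $(d_1,d_2)$ of $M$ with $nd_2-d_1+c_1=bc_2$ (an edge exists iff such a label exists). The cycle image of a directed cycle $C_0$ of $M$ is the edge-labelled subgraph of $\Gamma$ with edges the $(c_1,c_2)$ for which $\{(d_1,d_2)\in C_0\mid nd_2-d_1+c_1=bc_2\}\neq\emptyset$, labelled by this set, and vertices their endpoints. $\Gamma_C$ is the union of the cycle images of the directed cycles contained in $G_C$. The reflection of an edge-labelled subgraph of $\Gamma$ replaces each vertex $c$ by $\overline c$, each edge $(c_1,c_2)$ by $(\overline c_1,\overline c_2)$, and each label $(d_1,d_2)$ by $(\overline d_1,\overline d_2)$. When $n-1$ is a vertex of $\Gamma_C$, there is an $(n,b)$-permutiple with graph $\overline{G}_C$, and the reflection of $C$ is the class $\overline{C}=\mathrm{Cl}(\overline{G}_C)$ (with graph $\overline{G}_C$); $C$ is a symmetric class if $C=\overline{C}$. The symmetric closure of $C$ is the permutiple class $\widehat{C}$ with graph $G_C\cup\overline{G}_C$, i.e. $\widehat C=\mathrm{Cl}(G_C\cup\overline{G}_C)$; it is a symmetric class if it equals its reflection, the class with graph $\overline{G_C\cup\overline{G}_C}$. *)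

theory Defs
  imports "HOL-Combinatorics.Permutations"
begin

text \<open>A digit tuple (d_k,...,d_0) is the list ds with ds!j = d_j, length k+1.
  Graphs on the digits {0..b-1} are edge sets of type (nat \<times> nat) set.\<close>

definition is_permutiple_wrt :: "nat \<Rightarrow> nat \<Rightarrow> nat list \<Rightarrow> (nat \<Rightarrow> nat) \<Rightarrow> bool" where
  "is_permutiple_wrt n b ds \<sigma> \<longleftrightarrow>
     ds \<noteq> [] \<and> (\<forall>j<length ds. ds ! j < b) \<and> \<sigma> permutes {..<length ds} \<and>
     (\<Sum>j<length ds. ds ! j * b ^ j) = n * (\<Sum>j<length ds. ds ! (\<sigma> j) * b ^ j)"

definition perm_graph :: "nat list \<Rightarrow> (nat \<Rightarrow> nat) \<Rightarrow> (nat \<times> nat) set" where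
  "perm_graph ds \<sigma> = {(ds ! j, ds ! (\<sigma> j)) | j. j < length ds}"

definition Cl :: "nat \<Rightarrow> nat \<Rightarrow> (nat \<times> nat) set \<Rightarrow> nat list set" where
  "Cl n b G = {ds. \<exists>\<sigma>. is_permutiple_wrt n b ds \<sigma> \<and> perm_graph ds \<sigma> \<subseteq> G}"

text \<open>G is the graph of some (n,b)-permutiple (so Cl(G) is a permutiple class with graph G).\<close>
definition is_class_graph :: "nat \<Rightarrow> nat \<Rightarrow> (nat \<times> nat) set \<Rightarrow> bool" where
  "is_class_graph n b G \<longleftrightarrow> (\<exists>ds \<sigma>. is_permutiple_wrt n b ds \<sigma> \<and> perm_graph ds \<sigma> = G)"

definition reflect_graph :: "nat \<Rightarrow> (nat \<times> nat) set \<Rightarrow> (nat \<times> nat) set" where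
  "reflect_graph b G = (\<lambda>(d1, d2). (b - 1 - d1, b - 1 - d2)) ` G"

definition dir_cycles :: "(nat \<times> nat) set \<Rightarrow> (nat \<times> nat) set set" where
  "dir_cycles G = {C0. \<exists>vs. vs \<noteq> [] \<and> distinct vs \<and>
      C0 = {(vs ! i, vs ! (Suc i mod length vs)) | i. i < length vs} \<and> C0 \<subseteq> G}"

text \<open>Edge-labelled subgraphs of the Hoey-Sloane graph are represented as sets of
  triples (c1, c2, (d1,d2)): edge (c1,c2) carrying label (d1,d2). Edges are the pairs
  (c1,c2) carrying at least one label, vertices are their endpoints.\<close>
definition cycle_image :: "nat \<Rightarrow> nat \<Rightarrow> (nat \<times> nat) set \<Rightarrow> (nat \<times> nat \<times> (nat \<times> nat)) set" where
  "cycle_image n b C0 = {(c1, c2, (d1, d2)) | c1 c2 d1 d2.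
      c1 < n \<and> c2 < n \<and> (d1, d2) \<in> C0 \<and> int n * int d2 - int d1 + int c1 = int b * int c2}"

definition Gamma_of :: "nat \<Rightarrow> nat \<Rightarrow> (nat \<times> nat) set \<Rightarrow> (nat \<times> nat \<times> (nat \<times> nat)) set" where
  "Gamma_of n b G = (\<Union>C0\<in>dir_cycles G. cycle_image n b C0)"

definition lgraph_vertices :: "(nat \<times> nat \<times> (nat \<times> nat)) set \<Rightarrow> nat set" where
  "lgraph_vertices L = {c. \<exists>c' l. (c, c', l) \<in> L \<or> (c', c, l) \<in> L}"

definition reflect_lgraph :: "nat \<Rightarrow> nat \<Rightarrow> (nat \<times> nat \<times> (nat \<times> nat)) set \<Rightarrow> (nat \<times> nat \<times> (nat \<times> nat)) set" where
  "reflect_lgraph n b L = (\<lambda>(c1, c2, (d1, d2)). (n - 1 - c1, n - 1 - c2, (b - 1 - d1, b - 1 - d2))) ` L"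

definition symmetric_class :: "nat \<Rightarrow> nat \<Rightarrow> (nat \<times> nat) set \<Rightarrow> bool" where
  "symmetric_class n b H \<longleftrightarrow> Cl n b H = Cl n b (reflect_graph b H)"

end

theory Submission
  imports Defs
begin


definition vl :: "nat \<Rightarrow> nat list \<Rightarrow> nat" where
  "vl b xs = (\<Sum>j<length xs. xs ! j * b ^ j)"

lemma vl_Nil[simp]: "vl b [] = 0" by (simp add: vl_def)

lemma vl_Cons[simp]: "vl b (x # xs) = x + b * vl b xs"
  unfolding vl_def length_Cons sum.lessThan_Suc_shift by (simp add: sum_distrib_left mult_ac)

lemma vl_append: "vl b (xs @ ys) = vl b xs + b ^ length xs * vl b ys"
  by (induction xs) (simp_all add: algebra_simps)

lemma vl_less: "\<forall>x\<in>set xs. x < b \<Longrightarrow> vl b xs < b ^ length xs"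
proof (induction xs)
  case Nil then show ?case by simp
next
  case (Cons x xs)
  then have h1: "vl b xs + 1 \<le> b ^ length xs" and h2: "x + 1 \<le> b" by auto
  have "x + b * vl b xs + 1 \<le> b + b * vl b xs" using h2 by simp
  also have "\<dots> = b * (vl b xs + 1)" by (simp add: algebra_simps)
  also have "\<dots> \<le> b * b ^ length xs" using h1 by (intro mult_left_mono) auto
  finally show ?case by simp
qed

lemma vl_inj: "length xs = length ys \<Longrightarrow> \<forall>x\<in>set xs. x < b \<Longrightarrow> \<forall>x\<in>set ys. x < b
  \<Longrightarrow> vl b xs = vl b ys \<Longrightarrow> xs = ys"
proof (induction xs arbitrary: ys)
  case Nil then show ?case by simp
next
  case (Cons x xs)
  then obtain y ys' where ys: "ys = y # ys'" by (cases ys) auto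
  have xb: "x < b" "y < b" using Cons.prems ys by auto
  have e: "x + b * vl b xs = y + b * vl b ys'" using Cons.prems ys by simp
  then have "(x + b * vl b xs) mod b = (y + b * vl b ys') mod b" by simp
  then have "x = y" using xb by simp
  with e have "vl b xs = vl b ys'" using xb by simp
  then have "xs = ys'" using Cons ys by auto
  then show ?case using \<open>x = y\<close> ys by simp
qed

lemma vl_compl: "\<forall>x\<in>set xs. x < b \<Longrightarrow>
   int (vl b (map (\<lambda>d. b - 1 - d) xs)) = int b ^ length xs - 1 - int (vl b xs)"
proof (induction xs)
  case Nil then show ?case by simp
next
  case (Cons x xs)
  then have "x < b" by auto
  then have h: "int (b - 1 - x) = int b - 1 - int x" by auto
  have "int (vl b (map (\<lambda>d. b - 1 - d) (x # xs))) =
     int (b - 1 - x) + int b * int (vl b (map (\<lambda>d. b - 1 - d) xs))" by simp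
  also have "\<dots> = int b - 1 - int x + int b * (int b ^ length xs - 1 - int (vl b xs))"
    using Cons h by simp
  also have "\<dots> = int b ^ length (x # xs) - 1 - int (vl b (x # xs))"
    by (simp add: algebra_simps)
  finally show ?case .
qed

lemma permutiple_list:
  assumes "is_permutiple_wrt n b ds \<sigma>"
  defines "ys \<equiv> permute_list \<sigma> ds"
  shows "vl b ds = n * vl b ys" "perm_graph ds \<sigma> = set (zip ds ys)" "mset ys = mset ds"
    "\<forall>x\<in>set ds. x < b" "\<forall>x\<in>set ys. x < b" "length ys = length ds" "ds \<noteq> []"
proof -
  have p: "\<sigma> permutes {..<length ds}" and d: "\<forall>j<length ds. ds ! j < b" and ne: "ds \<noteq> []"
    and e: "(\<Sum>j<length ds. ds ! j * b ^ j) = n * (\<Sum>j<length ds. ds ! (\<sigma> j) * b ^ j)"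
    using assms(1) unfolding is_permutiple_wrt_def by auto
  have yn: "\<And>j. j < length ds \<Longrightarrow> ys ! j = ds ! \<sigma> j"
    unfolding ys_def by (rule permute_list_nth[OF p])
  have "(\<Sum>j<length ds. ds ! (\<sigma> j) * b ^ j) = vl b ys"
    unfolding vl_def ys_def length_permute_list
    by (rule sum.cong) (auto simp: permute_list_nth[OF p])
  then show "vl b ds = n * vl b ys" using e by (simp add: vl_def)
  show "perm_graph ds \<sigma> = set (zip ds ys)"
    unfolding perm_graph_def set_zip using yn by (auto simp: ys_def)
  show "mset ys = mset ds" unfolding ys_def using p by simp
  show "\<forall>x\<in>set ds. x < b" using d by (auto simp: in_set_conv_nth)
  then show "\<forall>x\<in>set ys. x < b" using \<open>mset ys = mset ds\<close>
    by (metis mset_eq_setD)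
  show "length ys = length ds" by (simp add: ys_def)
  show "ds \<noteq> []" by fact
qed

lemma list_permutiple:
  assumes "xs \<noteq> []" "mset xs = mset ys" "\<forall>x\<in>set xs. x < b" "vl b xs = n * vl b ys"
  shows "\<exists>\<pi>. is_permutiple_wrt n b xs \<pi> \<and> perm_graph xs \<pi> = set (zip xs ys)"
proof -
  obtain p where p: "p permutes {..<length xs}" "permute_list p xs = ys"
    using mset_eq_permutation[of ys xs] assms(2) by metis
  have "is_permutiple_wrt n b xs p"
  proof -
    have "(\<Sum>j<length xs. xs ! (p j) * b ^ j) = vl b ys"
      unfolding vl_def p(2)[symmetric] length_permute_list
      by (rule sum.cong) (auto simp: permute_list_nth[OF p(1)])
    then show ?thesis unfolding is_permutiple_wrt_def using assms p(1)
      by (auto simp: vl_def)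
  qed
  moreover have "perm_graph xs p = set (zip xs ys)"
    using permutiple_list(2)[OF calculation] p(2) by simp
  ultimately show ?thesis by blast
qed

lemma graph_unique:
  assumes "is_permutiple_wrt n b ds \<sigma>" "is_permutiple_wrt n b ds \<tau>" "0 < n"
  shows "perm_graph ds \<sigma> = perm_graph ds \<tau>"
proof -
  note A = permutiple_list[OF assms(1)] and B = permutiple_list[OF assms(2)]
  have "vl b (permute_list \<sigma> ds) = vl b (permute_list \<tau> ds)"
    using A(1) B(1) assms(3) by simp
  then have "permute_list \<sigma> ds = permute_list \<tau> ds"
    using A(5,6) B(5,6) by (intro vl_inj) auto
  then show ?thesis using A(2) B(2) by simp
qed

lemma Cl_sub:
  assumes "is_permutiple_wrt n b q \<tau>" "q \<in> Cl n b H" "0 < n"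
  shows "perm_graph q \<tau> \<subseteq> H"
  using assms graph_unique unfolding Cl_def by blast



definition cr :: "nat \<Rightarrow> nat \<Rightarrow> nat list \<Rightarrow> nat list \<Rightarrow> nat \<Rightarrow> int" where
  "cr b n xs ys t = int (vl b (drop t xs)) - int n * int (vl b (drop t ys))"

lemma vl_take_drop: "t \<le> length xs \<Longrightarrow> vl b xs = vl b (take t xs) + b ^ t * vl b (drop t xs)"
  using vl_append[of b "take t xs" "drop t xs"] by simp

lemma carry:
  assumes "vl b xs = n * vl b ys" "length ys = length xs" "t \<le> length xs"
  shows "int n * int (vl b (take t ys)) - int (vl b (take t xs)) = cr b n xs ys t * int b ^ t"
proof -
  have "int (vl b xs) = int (vl b (take t xs)) + int b ^ t * int (vl b (drop t xs))"
    using vl_take_drop[OF assms(3), of b] by simp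
  moreover have "int (vl b ys) = int (vl b (take t ys)) + int b ^ t * int (vl b (drop t ys))"
    using vl_take_drop[of t ys b] assms(2,3) by simp
  moreover have "int (vl b xs) = int n * int (vl b ys)" using assms(1) by simp
  ultimately show ?thesis unfolding cr_def by (simp add: algebra_simps)
qed

lemma carry_bounds:
  assumes "vl b xs = n * vl b ys" "length ys = length xs" "t \<le> length xs"
    "\<forall>x\<in>set xs. x < b" "\<forall>x\<in>set ys. x < b" "0 < b" "0 < n"
  shows "0 \<le> cr b n xs ys t" "cr b n xs ys t < int n"
proof -
  define Q where "Q = int b ^ t"
  have Q: "Q > 0" using assms(6) by (simp add: Q_def)
  have e: "int n * int (vl b (take t ys)) - int (vl b (take t xs)) = cr b n xs ys t * Q"
    using carry[OF assms(1-3)] by (simp add: Q_def)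
  have "vl b (take t ys) < b ^ t"
    using vl_less[of "take t ys" b] assms by (auto dest: in_set_takeD)
  then have yl: "int (vl b (take t ys)) + 1 \<le> Q" unfolding Q_def
    by (metis of_nat_less_iff of_nat_power zless_imp_add1_zle)
  have "vl b (take t xs) < b ^ t"
    using vl_less[of "take t xs" b] assms by (auto dest: in_set_takeD)
  then have xl: "int (vl b (take t xs)) + 1 \<le> Q" unfolding Q_def
    by (metis of_nat_less_iff of_nat_power zless_imp_add1_zle)
  show "0 \<le> cr b n xs ys t"
  proof (rule ccontr)
    assume "\<not> 0 \<le> cr b n xs ys t"
    then have "cr b n xs ys t \<le> -1" by simp
    then have "cr b n xs ys t * Q \<le> -1 * Q" using Q by (intro mult_right_mono) auto
    moreover have "int n * int (vl b (take t ys)) \<ge> 0" by simp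
    ultimately show False using e xl by linarith
  qed
  show "cr b n xs ys t < int n"
  proof (rule ccontr)
    assume "\<not> cr b n xs ys t < int n"
    then have "int n * Q \<le> cr b n xs ys t * Q" using Q by (intro mult_right_mono) auto
    moreover have "int n * int (vl b (take t ys)) \<le> int n * (Q - 1)"
      using yl by (intro mult_left_mono) auto
    ultimately show False using e assms(7) by (simp add: algebra_simps)
  qed
qed

lemma carry_step:
  assumes "t < length xs" "length ys = length xs"
  shows "cr b n xs ys t + int n * int (ys ! t) - int (xs ! t) = int b * cr b n xs ys (Suc t)"
proof -
  have "drop t xs = xs ! t # drop (Suc t) xs" using assms by (simp add: Cons_nth_drop_Suc)
  moreover have "drop t ys = ys ! t # drop (Suc t) ys" using assms by (simp add: Cons_nth_drop_Suc)
  ultimately show ?thesis unfolding cr_def by (simp add: algebra_simps)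
qed

lemma carry_unique:
  fixes c1 c2 c3 c4 :: int
  assumes "c1 - d1 = b * c2" "c3 - d1 = b * c4" "0 \<le> c1" "c1 < n" "0 \<le> c3" "c3 < n" "n < b"
  shows "c1 = c3 \<and> c2 = c4"
proof -
  have e: "c1 - c3 = b * (c2 - c4)" using assms(1,2) by (simp add: algebra_simps)
  have "c2 - c4 = 0"
  proof (rule ccontr)
    assume "c2 - c4 \<noteq> 0"
    then consider "c2 - c4 \<ge> 1" | "c2 - c4 \<le> -1" by linarith
    then show False
    proof cases
      case 1
      then have "b * (c2 - c4) \<ge> b * 1" using assms by (intro mult_left_mono) auto
      then have "c1 - c3 \<ge> b" using e by simp
      then show False using assms(3-7) by linarith
    next
      case 2
      then have "b * (c2 - c4) \<le> b * (-1)" using assms by (intro mult_left_mono) auto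
      then have "c1 - c3 \<le> - b" using e by simp
      then show False using assms(3-7) by linarith
    qed
  qed
  then show ?thesis using e by simp
qed

lemma find_t:
  assumes "vl b xs = n * vl b ys" "length ys = length xs"
    "\<forall>x\<in>set xs. x < b" "\<forall>x\<in>set ys. x < b" "n < b"
    "c1 < n" "c2 < n" "(d1, d2) \<in> set (zip xs ys)"
    "int n * int d2 - int d1 + int c1 = int b * int c2" "c1 = n - 1 \<or> c2 = n - 1" "0 < n"
  shows "\<exists>t\<le>length xs. int n * int (vl b (take t ys)) - int (vl b (take t xs)) = (int n - 1) * int b ^ t"
proof -
  obtain j where j: "j < length xs" "d1 = xs ! j" "d2 = ys ! j"
    using assms(8,2) by (auto simp: set_zip)
  have s: "cr b n xs ys j + int n * int d2 - int d1 = int b * cr b n xs ys (Suc j)"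
    using carry_step[OF j(1) assms(2)] j by simp
  have bd: "0 \<le> cr b n xs ys j" "cr b n xs ys j < int n"
    using carry_bounds[OF assms(1,2) _ assms(3,4) _ assms(11)] j assms(5) by auto
  have u: "int c1 = cr b n xs ys j \<and> int c2 = cr b n xs ys (Suc j)"
    by (rule carry_unique[of "int c1" "int d1 - int n * int d2" "int b" "int c2"
          "cr b n xs ys j" "cr b n xs ys (Suc j)" "int n"]) (use assms s bd in auto)
  from assms(10) show ?thesis
  proof
    assume "c1 = n - 1"
    then have "cr b n xs ys j = int n - 1" using u assms(11) by simp
    then show ?thesis using carry[OF assms(1,2), of j] j(1) by (intro exI[of _ j]) simp
  next
    assume "c2 = n - 1"
    then have "cr b n xs ys (Suc j) = int n - 1" using u assms(11) by simp
    then show ?thesis using carry[OF assms(1,2), of "Suc j"] j(1) by (intro exI[of _ "Suc j"]) simp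
  qed
qed



lemma alg:
  fixes P Q X Y Xt Yt Xd Yd n :: int
  assumes "X = Xt + Q * Xd" "Y = Yt + Q * Yd" "X = n * Y" "n * Yt - Xt = (n - 1) * Q" "Q \<noteq> 0"
  shows "(P - 1 - Xd) + P * (Q - 1 - Xt) = n * ((P - 1 - Yd) + P * (Q - 1 - Yt))"
proof -
  have "Q * ((P - 1 - Xd) + P * (Q - 1 - Xt)) = Q * (P - 1) - (X - Xt) + P * Q * (Q - 1) - P * Q * Xt"
    using assms(1) by (simp add: algebra_simps)
  also have "\<dots> = Q * (P - 1) - (n * Y - n * Yt + (n - 1) * Q) + P * Q * (Q - 1) - P * Q * (n * Yt - (n - 1) * Q)"
    using assms(3,4) by (simp add: algebra_simps)
  also have "\<dots> = Q * (n * ((P - 1 - Yd) + P * (Q - 1 - Yt)))"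
    using assms(2) by (simp add: algebra_simps)
  finally show ?thesis using assms(5) by simp
qed

lemma vl_int_take_drop:
  "t \<le> length xs \<Longrightarrow> int (vl b xs) = int (vl b (take t xs)) + int b ^ t * int (vl b (drop t xs))"
  using vl_take_drop[of t xs b] by simp

lemma rotate_perm:
  assumes "vl b xs = n * vl b ys" "length ys = length xs"
    "\<forall>x\<in>set xs. x < b" "\<forall>x\<in>set ys. x < b" "0 < b" "t \<le> length xs" "mset xs = mset ys"
    "int n * int (vl b (take t ys)) - int (vl b (take t xs)) = (int n - 1) * int b ^ t"
  defines "f \<equiv> \<lambda>d. b - 1 - d"
  defines "xs' \<equiv> drop t (map f xs) @ take t (map f xs)"
    and "ys' \<equiv> drop t (map f ys) @ take t (map f ys)"
  shows "vl b xs' = n * vl b ys'" "mset xs' = mset ys'" "\<forall>x\<in>set xs'. x < b"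
    "set (zip xs' ys') = reflect_graph b (set (zip xs ys))" "length xs' = length xs"
proof -
  let ?L = "length xs"
  define P where "P = int b ^ (?L - t)"
  define Q where "Q = int b ^ t"
  have xd: "\<forall>x\<in>set (drop t xs). x < b" "\<forall>x\<in>set (take t xs). x < b"
    "\<forall>x\<in>set (drop t ys). x < b" "\<forall>x\<in>set (take t ys). x < b"
    using assms(3,4) by (auto dest: in_set_dropD in_set_takeD)
  have "int (vl b xs') = int (vl b (map f (drop t xs))) + P * int (vl b (map f (take t xs)))"
    unfolding xs'_def P_def by (simp add: vl_append drop_map take_map)
  also have "\<dots> = (P - 1 - int (vl b (drop t xs))) + P * (Q - 1 - int (vl b (take t xs)))"
    unfolding f_def using vl_compl[OF xd(1)] vl_compl[OF xd(2)] assms(6)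
    by (simp add: P_def Q_def min_def)
  also have "\<dots> = int n * ((P - 1 - int (vl b (drop t ys))) + P * (Q - 1 - int (vl b (take t ys))))"
    apply (rule alg)
    using vl_int_take_drop[OF assms(6), of b] vl_int_take_drop[of t ys b] assms(1,2,5,6,8)
    by (simp_all add: Q_def)
  also have "(P - 1 - int (vl b (drop t ys))) + P * (Q - 1 - int (vl b (take t ys))) = int (vl b ys')"
  proof -
    have "int (vl b ys') = int (vl b (map f (drop t ys))) + P * int (vl b (map f (take t ys)))"
      unfolding ys'_def P_def using assms(2) by (simp add: vl_append drop_map take_map)
    also have "\<dots> = (P - 1 - int (vl b (drop t ys))) + P * (Q - 1 - int (vl b (take t ys)))"
      unfolding f_def using vl_compl[OF xd(3)] vl_compl[OF xd(4)] assms(6,2)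
      by (simp add: P_def Q_def min_def)
    finally show ?thesis by simp
  qed
  finally have "int (vl b xs') = int n * int (vl b ys')" .
  then show "vl b xs' = n * vl b ys'" by (metis of_nat_eq_iff of_nat_mult)
  have "mset xs' = image_mset f (mset xs)"
    unfolding xs'_def by (metis mset_append mset_map append_take_drop_id union_commute)
  moreover have "mset ys' = image_mset f (mset ys)"
    unfolding ys'_def by (metis mset_append mset_map append_take_drop_id union_commute)
  ultimately show "mset xs' = mset ys'" using assms(7) by simp
  show "\<forall>x\<in>set xs'. x < b" unfolding xs'_def f_def using assms(5)
    by (auto simp: drop_map take_map dest!: in_set_dropD in_set_takeD)
  have "zip xs' ys' = drop t (zip (map f xs) (map f ys)) @ take t (zip (map f xs) (map f ys))"
    unfolding xs'_def ys'_def using assms(2) by (simp add: drop_zip take_zip)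
  then have "set (zip xs' ys') = set (zip (map f xs) (map f ys))"
    by (metis set_append append_take_drop_id sup_commute)
  then show "set (zip xs' ys') = reflect_graph b (set (zip xs ys))"
    unfolding reflect_graph_def zip_map_map f_def by auto
  show "length xs' = length xs" unfolding xs'_def using assms(6) by simp
qed

lemma concat_perm:
  assumes "vl b xs = n * vl b ys" "length ys = length xs" "vl b xs' = n * vl b ys'"
  shows "vl b (xs @ xs') = n * vl b (ys @ ys')"
  using assms by (simp add: vl_append algebra_simps)



lemma shortcut:
  "successively R p \<Longrightarrow> p \<noteq> [] \<Longrightarrow>
   \<exists>q. successively R q \<and> distinct q \<and> q \<noteq> [] \<and> hd q = hd p \<and> last q = last p"
proof (induction "length p" arbitrary: p rule: less_induct)
  case less
  show ?case
  proof (cases "distinct p")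
    case True then show ?thesis using less.prems by blast
  next
    case False
    then obtain as y bs cs where p: "p = as @ [y] @ bs @ [y] @ cs"
      using not_distinct_decomp by blast
    define p' where "p' = as @ y # cs"
    have "length p' < length p" unfolding p p'_def by simp
    moreover have "successively R p'"
      using less.prems(1) unfolding p p'_def
      by (auto simp: successively_append_iff successively_Cons)
    moreover have "p' \<noteq> []" unfolding p'_def by simp
    ultimately obtain q where q: "successively R q" "distinct q" "q \<noteq> []" "hd q = hd p'" "last q = last p'"
      using less.hyps by blast
    have "hd p' = hd p" "last p' = last p" unfolding p p'_def
      by (cases as; simp) (cases cs; simp)
    then show ?thesis using q by auto
  qed
qed

lemma cycle_from_walk:
  assumes "successively (\<lambda>x y. (x, y) \<in> G) (w0 # q)" "distinct q" "q \<noteq> []" "last q = w0"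
  shows "\<exists>C0\<in>dir_cycles G. (w0, hd q) \<in> C0"
proof -
  define vs where "vs = w0 # butlast q"
  have e: "vs @ [w0] = w0 # q" unfolding vs_def using assms(3,4)
    by (metis append_Cons append_butlast_last_id)
  have lv: "length vs = length q" unfolding vs_def using assms(3) by simp
  have key: "vs ! i = (w0 # q) ! i \<and> vs ! (Suc i mod length vs) = (w0 # q) ! (Suc i)"
    if "i < length vs" for i
  proof -
    have a: "(w0 # q) ! k = vs ! k" if "k < length vs" for k
      using that by (simp flip: e add: nth_append)
    show ?thesis
    proof (cases "Suc i < length vs")
      case True then show ?thesis using a[of i] a[of "Suc i"] that by simp
    next
      case False
      then have "Suc i = length vs" using that by simp
      moreover have "(w0 # q) ! length vs = w0" by (simp flip: e)
      ultimately show ?thesis using a that by (simp add: vs_def)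
    qed
  qed
  define C0 where "C0 = {(vs ! i, vs ! (Suc i mod length vs)) | i. i < length vs}"
  have "distinct vs"
  proof -
    have "q = butlast q @ [w0]" using assms(3,4) by (metis append_butlast_last_id)
    then have "distinct (butlast q @ [w0])" using assms(2) by simp
    then show ?thesis unfolding vs_def by auto
  qed
  then have "C0 \<in> dir_cycles G"
    unfolding dir_cycles_def C0_def
  proof (intro CollectI exI[of _ vs] conjI)
    show "vs \<noteq> []" by (simp add: vs_def)
    show "{(vs ! i, vs ! (Suc i mod length vs)) | i. i < length vs} \<subseteq> G"
    proof safe
      fix i assume "i < length vs"
      then show "(vs ! i, vs ! (Suc i mod length vs)) \<in> G"
        using key[of i] successively_nth[OF assms(1), of i] lv by simp
    qed
  qed simp_all
  moreover have "(w0, hd q) \<in> C0"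
    unfolding C0_def using key[of 0] assms(3) by (auto simp: vs_def hd_conv_nth intro!: exI[of _ 0])
  ultimately show ?thesis by blast
qed

lemma orbit_cycle:
  assumes "\<sigma> permutes {..<length xs}" "j < length xs"
  shows "\<exists>C0\<in>dir_cycles {(xs ! i, xs ! (\<sigma> i)) | i. i < length xs}. (xs ! j, xs ! (\<sigma> j)) \<in> C0"
proof -
  let ?G = "{(xs ! i, xs ! (\<sigma> i)) | i. i < length xs}"
  have "permutation \<sigma>" using assms(1) permutation_permutes by blast
  then obtain m where m: "m > 0" "(\<sigma> ^^ m) j = j" by (rule permutation_self)
  define p where "p = map (\<lambda>i. xs ! ((\<sigma> ^^ (Suc i)) j)) [0..<m]"
  have pin: "(\<sigma> ^^ k) j < length xs" for k
    using permutes_in_funpow_image[OF assms(1)] assms(2) by auto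
  have sp: "successively (\<lambda>x y. (x, y) \<in> ?G) p"
    unfolding successively_conv_nth
  proof (intro allI impI)
    fix i assume "Suc i < length p"
    then have "i < m" "Suc i < m" by (auto simp: p_def)
    then have "p ! i = xs ! ((\<sigma> ^^ (Suc i)) j)" "p ! Suc i = xs ! ((\<sigma> ^^ (Suc (Suc i))) j)"
      unfolding p_def by (simp_all only: nth_map length_upt nth_upt) simp_all
    moreover have "(\<sigma> ^^ (Suc (Suc i))) j = \<sigma> ((\<sigma> ^^ (Suc i)) j)" by simp
    ultimately have "(p ! i, p ! Suc i) = (xs ! ((\<sigma> ^^ (Suc i)) j), xs ! (\<sigma> ((\<sigma> ^^ (Suc i)) j)))" by simp
    then show "(p ! i, p ! Suc i) \<in> ?G" using pin[of "Suc i"] by auto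
  qed
  have pne: "p \<noteq> []" using m by (simp add: p_def)
  have um: "[0..<m] = 0 # [1..<m]" using m by (simp add: upt_conv_Cons)
  have hp: "hd p = xs ! (\<sigma> j)" unfolding p_def um by simp
  have um2: "[0..<m] = [0..<m - 1] @ [m - 1]" using m
    by (metis Suc_diff_1 upt_Suc_append zero_le)
  have "last p = xs ! ((\<sigma> ^^ (Suc (m - 1))) j)" unfolding p_def um2
    by (simp only: map_append last_snoc list.map)
  then have lp: "last p = xs ! j" using m by simp
  obtain q where q: "successively (\<lambda>x y. (x, y) \<in> ?G) q" "distinct q" "q \<noteq> []"
    "hd q = hd p" "last q = last p"
    using shortcut[OF sp pne] by blast
  have "(xs ! j, xs ! (\<sigma> j)) \<in> ?G" using assms(2) by blast
  then have "successively (\<lambda>x y. (x, y) \<in> ?G) (xs ! j # q)"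
    using q hp by (simp add: successively_Cons)
  from cycle_from_walk[OF this q(2,3)] show ?thesis using q(4,5) hp lp by simp
qed



definition lab :: "(nat \<times> nat \<times> (nat \<times> nat)) set \<Rightarrow> (nat \<times> nat) set" where
  "lab L = {l. \<exists>c1 c2. (c1, c2, l) \<in> L}"

lemma lab_reflect: "lab (reflect_lgraph n b L) = reflect_graph b (lab L)"
  unfolding lab_def reflect_lgraph_def reflect_graph_def by force

lemma lab_Gamma:
  assumes "is_permutiple_wrt n b ds \<sigma>" "0 < n" "n < b"
  shows "lab (Gamma_of n b (perm_graph ds \<sigma>)) = perm_graph ds \<sigma>"
proof
  show "lab (Gamma_of n b (perm_graph ds \<sigma>)) \<subseteq> perm_graph ds \<sigma>"
    unfolding lab_def Gamma_of_def cycle_image_def dir_cycles_def by blast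
next
  show "perm_graph ds \<sigma> \<subseteq> lab (Gamma_of n b (perm_graph ds \<sigma>))"
  proof
    fix e assume "e \<in> perm_graph ds \<sigma>"
    then obtain j where j: "j < length ds" "e = (ds ! j, ds ! \<sigma> j)"
      unfolding perm_graph_def by blast
    have p: "\<sigma> permutes {..<length ds}" using assms(1) unfolding is_permutiple_wrt_def by auto
    obtain C0 where C0: "C0 \<in> dir_cycles (perm_graph ds \<sigma>)" "(ds ! j, ds ! \<sigma> j) \<in> C0"
      using orbit_cycle[OF p j(1)] unfolding perm_graph_def by blast
    define ys where "ys = permute_list \<sigma> ds"
    note L = permutiple_list[OF assms(1), folded ys_def]
    have yj: "ys ! j = ds ! \<sigma> j" unfolding ys_def using permute_list_nth[OF p j(1)] .
    have b0: "0 < b" using assms by simp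
    have B1: "0 \<le> cr b n ds ys j" "cr b n ds ys j < int n"
      using carry_bounds[OF L(1,6) _ L(4,5) b0 assms(2), of j] j by auto
    have B2: "0 \<le> cr b n ds ys (Suc j)" "cr b n ds ys (Suc j) < int n"
      using carry_bounds[OF L(1,6) _ L(4,5) b0 assms(2), of "Suc j"] j by auto
    have S: "cr b n ds ys j + int n * int (ys ! j) - int (ds ! j) = int b * cr b n ds ys (Suc j)"
      using carry_step[OF j(1) L(6)] .
    have "(nat (cr b n ds ys j), nat (cr b n ds ys (Suc j)), e) \<in> cycle_image n b C0"
      unfolding cycle_image_def j(2) using C0(2) B1 B2 S yj by auto
    then show "e \<in> lab (Gamma_of n b (perm_graph ds \<sigma>))"
      unfolding lab_def Gamma_of_def using C0(1) by blast
  qed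
qed

lemma reflect_cycle:
  assumes "C0 \<in> dir_cycles G" "reflect_graph b G = G" "\<forall>p\<in>G. fst p < b \<and> snd p < b"
  shows "reflect_graph b C0 \<in> dir_cycles G"
proof -
  have "\<exists>vs. vs \<noteq> [] \<and> distinct vs \<and>
    C0 = {(vs ! i, vs ! (Suc i mod length vs)) | i. i < length vs} \<and> C0 \<subseteq> G"
    using assms(1) unfolding dir_cycles_def by simp
  then obtain vs where vs0: "vs \<noteq> [] \<and> distinct vs \<and>
    C0 = {(vs ! i, vs ! (Suc i mod length vs)) | i. i < length vs} \<and> C0 \<subseteq> G"
    by (rule exE)
  note vs = conjunct1[OF vs0] conjunct1[OF conjunct2[OF vs0]]
    conjunct1[OF conjunct2[OF conjunct2[OF vs0]]] conjunct2[OF conjunct2[OF conjunct2[OF vs0]]]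
  define f where "f = (\<lambda>d::nat. b - 1 - d)"
  have vb: "v < b" if vin: "v \<in> set vs" for v
  proof -
    obtain i where i: "i < length vs" "v = vs ! i" using vin by (metis in_set_conv_nth)
    then have "(vs ! i, vs ! (Suc i mod length vs)) \<in> C0" unfolding vs(3) by auto
    then have "(vs ! i, vs ! (Suc i mod length vs)) \<in> G" using vs(4) by blast
    then have "fst (vs ! i, vs ! (Suc i mod length vs)) < b" using assms(3) by auto
    then show ?thesis using i by simp
  qed
  have "inj_on f (set vs)"
  proof (rule inj_onI)
    fix x y assume "x \<in> set vs" "y \<in> set vs" "f x = f y"
    then show "x = y" using vb[of x] vb[of y] unfolding f_def by simp
  qed
  then have d: "distinct (map f vs)" using vs(2) by (simp add: distinct_map)
  have len: "length (map f vs) = length vs" by simp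
  have c: "reflect_graph b C0 = {(map f vs ! i, map f vs ! (Suc i mod length (map f vs))) | i. i < length (map f vs)}"
  proof -
    have m: "Suc i mod length vs < length vs" for i using vs(1) by simp
    have "reflect_graph b C0 = (\<lambda>i. (f (vs ! i), f (vs ! (Suc i mod length vs)))) ` {..<length vs}"
      unfolding vs(3) reflect_graph_def f_def by auto
    also have "\<dots> = (\<lambda>i. (map f vs ! i, map f vs ! (Suc i mod length (map f vs)))) ` {..<length vs}"
      using m by (intro image_cong) auto
    also have "\<dots> = {(map f vs ! i, map f vs ! (Suc i mod length (map f vs))) | i. i < length (map f vs)}"
      unfolding len by blast
    finally show ?thesis .
  qed
  have "reflect_graph b C0 \<subseteq> reflect_graph b G"
    unfolding reflect_graph_def using vs(4) by (rule image_mono)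
  then have sub: "reflect_graph b C0 \<subseteq> G" using assms(2) by simp
  show ?thesis unfolding dir_cycles_def
    apply (rule CollectI, rule exI[of _ "map f vs"])
    apply (intro conjI)
       apply (simp add: vs(1))
      apply (rule d)
     apply (rule c)
    apply (rule sub)
    done
qed

lemma reflect_Gamma_sym:
  assumes "reflect_graph b G = G" "\<forall>p\<in>G. fst p < b \<and> snd p < b" "0 < n"
  shows "reflect_lgraph n b (Gamma_of n b G) = Gamma_of n b G"
proof -
  define rl where "rl = (\<lambda>(c1::nat, c2::nat, (d1::nat, d2::nat)). (n - 1 - c1, n - 1 - c2, (b - 1 - d1, b - 1 - d2)))"
  have R: "rl x \<in> Gamma_of n b G \<and> rl (rl x) = x" if xG: "x \<in> Gamma_of n b G" for x
  proof -
    obtain C0 c1 c2 d1 d2 where C: "C0 \<in> dir_cycles G" "x = (c1, c2, (d1, d2))" "c1 < n" "c2 < n"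
      "(d1, d2) \<in> C0" "int n * int d2 - int d1 + int c1 = int b * int c2"
      using xG unfolding Gamma_of_def cycle_image_def by blast
    have "C0 \<subseteq> G" using C(1) unfolding dir_cycles_def by blast
    then have "(d1, d2) \<in> G" using C(5) by blast
    then have "fst (d1, d2) < b \<and> snd (d1, d2) < b" using assms(2) by blast
    then have db: "d1 < b" "d2 < b" by simp_all
    have C': "reflect_graph b C0 \<in> dir_cycles G" by (rule reflect_cycle[OF C(1) assms(1,2)])
    have "(b - 1 - d1, b - 1 - d2) \<in> reflect_graph b C0" using C(5) unfolding reflect_graph_def by force
    moreover have "int n * int (b - 1 - d2) - int (b - 1 - d1) + int (n - 1 - c1) = int b * int (n - 1 - c2)"
    proof -
      have h: "int (b - 1 - d2) = int b - 1 - int d2" "int (b - 1 - d1) = int b - 1 - int d1"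
        "int (n - 1 - c1) = int n - 1 - int c1" "int (n - 1 - c2) = int n - 1 - int c2"
        using db C(3,4) by auto
      show ?thesis unfolding h using C(6) by (simp add: algebra_simps)
    qed
    ultimately have "rl x \<in> cycle_image n b (reflect_graph b C0)"
      unfolding cycle_image_def rl_def C(2) using C(3,4) by auto
    then have "rl x \<in> Gamma_of n b G" unfolding Gamma_of_def using C' by blast
    moreover have "rl (rl x) = x" unfolding rl_def C(2) using C(3,4) db by auto
    ultimately show ?thesis by blast
  qed
  have "reflect_lgraph n b (Gamma_of n b G) = rl ` Gamma_of n b G"
    unfolding reflect_lgraph_def rl_def by simp
  also have "\<dots> = Gamma_of n b G"
  proof
    show "rl ` Gamma_of n b G \<subseteq> Gamma_of n b G" using R by blast
    show "Gamma_of n b G \<subseteq> rl ` Gamma_of n b G"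
    proof
      fix x assume "x \<in> Gamma_of n b G"
      then show "x \<in> rl ` Gamma_of n b G" using R by (metis image_eqI)
    qed
  qed
  finally show ?thesis .
qed



theorem theorem18:
  fixes n b :: nat and ds :: "nat list" and \<sigma> :: "nat \<Rightarrow> nat" and G :: "(nat \<times> nat) set"
  assumes "1 < n" and "n < b"
    and "is_permutiple_wrt n b ds \<sigma>"
    and "G = perm_graph ds \<sigma>"
    and "n - 1 \<in> lgraph_vertices (Gamma_of n b G)"
  shows "is_class_graph n b (G \<union> reflect_graph b G)
         \<and> symmetric_class n b (G \<union> reflect_graph b G)
         \<and> (symmetric_class n b G \<longleftrightarrow> Cl n b G = Cl n b (G \<union> reflect_graph b G))
         \<and> (Cl n b G = Cl n b (G \<union> reflect_graph b G) \<longleftrightarrow>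
              reflect_lgraph n b (Gamma_of n b G) = Gamma_of n b G)
         \<and> (reflect_lgraph n b (Gamma_of n b G) = Gamma_of n b G \<longleftrightarrow>
              reflect_graph b G = G)"
proof -
  let ?R = "reflect_graph b G"
  have n0: "0 < n" "0 < b" using assms(1,2) by auto
  define ys where "ys = permute_list \<sigma> ds"
  note L = permutiple_list[OF assms(3), folded ys_def]
  have G: "G = set (zip ds ys)" using L(2) assms(4) by simp
  have Gb: "\<forall>p\<in>G. fst p < b \<and> snd p < b" using G L(4,5)
    by (auto dest: set_zip_leftD set_zip_rightD)
  have RR: "reflect_graph b (reflect_graph b H) = H" if H: "\<forall>p\<in>H. fst p < b \<and> snd p < b" for H
  proof -
    have "reflect_graph b (reflect_graph b H) = (\<lambda>p. p) ` H"
      unfolding reflect_graph_def image_image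
    proof (rule image_cong[OF refl])
      fix p assume "p \<in> H"
      then have "fst p < b" "snd p < b" using H by auto
      then show "(case case p of (d1, d2) \<Rightarrow> (b - 1 - d1, b - 1 - d2) of
          (d1, d2) \<Rightarrow> (b - 1 - d1, b - 1 - d2)) = p"
        by (cases p) auto
    qed
    then show ?thesis by simp
  qed
  have RRG: "reflect_graph b ?R = G" using RR[OF Gb] .
  have "\<exists>c1 c2 d1 d2. c1 < n \<and> c2 < n \<and> (d1, d2) \<in> G \<and>
      int n * int d2 - int d1 + int c1 = int b * int c2 \<and> (c1 = n - 1 \<or> c2 = n - 1)"
  proof -
    obtain c' l where cl: "(n - 1, c', l) \<in> Gamma_of n b G \<or> (c', n - 1, l) \<in> Gamma_of n b G"
      using assms(5) unfolding lgraph_vertices_def by blast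
    have cyc: "C0 \<subseteq> G" if "C0 \<in> dir_cycles G" for C0
      using that unfolding dir_cycles_def by blast
    have mem: "x1 < n \<and> x2 < n \<and> (y1, y2) \<in> G \<and> int n * int y2 - int y1 + int x1 = int b * int x2"
      if xin: "(x1, x2, (y1, y2)) \<in> Gamma_of n b G" for x1 x2 y1 y2
    proof -
      obtain C0 where "C0 \<in> dir_cycles G" "(x1, x2, (y1, y2)) \<in> cycle_image n b C0"
        using xin unfolding Gamma_of_def by blast
      then show ?thesis unfolding cycle_image_def using cyc by blast
    qed
    obtain l1 l2 where l: "l = (l1, l2)" by (cases l)
    from cl show ?thesis
    proof
      assume "(n - 1, c', l) \<in> Gamma_of n b G"
      then show ?thesis using mem[of "n - 1" c' l1 l2] l by blast
    next
      assume "(c', n - 1, l) \<in> Gamma_of n b G"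
      then show ?thesis using mem[of c' "n - 1" l1 l2] l by blast
    qed
  qed
  then obtain c1 c2 d1 d2 where cd: "c1 < n" "c2 < n" "(d1, d2) \<in> set (zip ds ys)"
      "int n * int d2 - int d1 + int c1 = int b * int c2" "c1 = n - 1 \<or> c2 = n - 1"
    using G by blast
  obtain t where t: "t \<le> length ds"
    "int n * int (vl b (take t ys)) - int (vl b (take t ds)) = (int n - 1) * int b ^ t"
    using find_t[OF L(1,6,4,5) assms(2) cd(1,2,3,4,5) n0(1)] by blast
  define f where "f = (\<lambda>d::nat. b - 1 - d)"
  define xs' where "xs' = drop t (map f ds) @ take t (map f ds)"
  define ys' where "ys' = drop t (map f ys) @ take t (map f ys)"
  note RP = rotate_perm[OF L(1,6,4,5) n0(2) t(1) L(3)[symmetric] t(2), folded f_def, folded xs'_def ys'_def]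
  have "\<exists>\<pi>. is_permutiple_wrt n b (ds @ xs') \<pi> \<and> perm_graph (ds @ xs') \<pi> = set (zip (ds @ xs') (ys @ ys'))"
  proof (rule list_permutiple)
    show "ds @ xs' \<noteq> []" using L(7) by simp
    show "mset (ds @ xs') = mset (ys @ ys')" using L(3) RP(2) by simp
    show "\<forall>x\<in>set (ds @ xs'). x < b" using L(4) RP(3) by auto
    show "vl b (ds @ xs') = n * vl b (ys @ ys')" by (rule concat_perm[OF L(1,6) RP(1)])
  qed
  moreover have "set (zip (ds @ xs') (ys @ ys')) = G \<union> ?R"
    using L(6) RP(4) G by simp
  ultimately obtain q0 \<pi> where q0: "is_permutiple_wrt n b q0 \<pi>" "perm_graph q0 \<pi> = G \<union> ?R"
    by auto
  have A: "is_class_graph n b (G \<union> ?R)" unfolding is_class_graph_def using q0 by blast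
  have B: "symmetric_class n b (G \<union> ?R)"
    unfolding symmetric_class_def
  proof -
    have "reflect_graph b (G \<union> ?R) = ?R \<union> G"
      unfolding reflect_graph_def image_Un using RRG unfolding reflect_graph_def by simp
    then show "Cl n b (G \<union> ?R) = Cl n b (reflect_graph b (G \<union> ?R))" by (simp add: Un_commute)
  qed
  have dsC: "ds \<in> Cl n b G" unfolding Cl_def using assms(3,4) by blast
  have q0C: "q0 \<in> Cl n b (G \<union> ?R)" unfolding Cl_def using q0 by blast
  have mono: "reflect_graph b X \<subseteq> reflect_graph b Y" if "X \<subseteq> Y" for X Y
    unfolding reflect_graph_def using that by (rule image_mono)
  have eq1: "symmetric_class n b G \<longleftrightarrow> ?R = G"
  proof
    assume "symmetric_class n b G"
    then have "ds \<in> Cl n b ?R" using dsC unfolding symmetric_class_def by simp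
    then have s: "G \<subseteq> ?R" using Cl_sub[OF assms(3) _ n0(1)] assms(4) by simp
    then have "?R \<subseteq> G" using mono[OF s] RRG by simp
    then show "?R = G" using s by blast
  next
    assume "?R = G" then show "symmetric_class n b G" unfolding symmetric_class_def by simp
  qed
  have eq2: "Cl n b G = Cl n b (G \<union> ?R) \<longleftrightarrow> ?R = G"
  proof
    assume "Cl n b G = Cl n b (G \<union> ?R)"
    then have "q0 \<in> Cl n b G" using q0C by simp
    then have "G \<union> ?R \<subseteq> G" using Cl_sub[OF q0(1) _ n0(1)] q0(2) by simp
    then have s: "?R \<subseteq> G" by simp
    then have "G \<subseteq> ?R" using mono[OF s] RRG by simp
    then show "?R = G" using s by blast
  next
    assume "?R = G" then show "Cl n b G = Cl n b (G \<union> ?R)" by simp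
  qed
  have eq3: "reflect_lgraph n b (Gamma_of n b G) = Gamma_of n b G \<longleftrightarrow> ?R = G"
  proof
    assume "reflect_lgraph n b (Gamma_of n b G) = Gamma_of n b G"
    then have "lab (reflect_lgraph n b (Gamma_of n b G)) = lab (Gamma_of n b G)" by simp
    then show "?R = G" unfolding lab_reflect
      using lab_Gamma[OF assms(3) n0(1) assms(2)] assms(4) by simp
  next
    assume "?R = G" then show "reflect_lgraph n b (Gamma_of n b G) = Gamma_of n b G"
      using reflect_Gamma_sym[OF _ Gb n0(1)] by simp
  qed
  show ?thesis using A B eq1 eq2 eq3 by blast
qed

end
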